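(* Let $G$ be a graph with girth at least $5$ and let $S$ be an MLD-set of $G$. If $x\in S$ and $y\in V(G)\setminus S$ are such that the pair $\{x,y\}$ is not doubly resolved by $S$, then $N(y)=\{x\}$.
   Context: All graphs are finite, simple, undirected and connected; $d(u,v)$ is the shortest-path distance, $N(y)$ the open neighborhood, and the girth is the length of a shortest cycle (infinite for trees). A set $S\subseteq V(G)$ is resolving if for all distinct $x,y\in V(G)$ there is $u\in S$ with $d(u,x)\ne d(u,y)$; dominating if every vertex not in $S$ has a neighbor in $S$. An MLD-set is a set both resolving and dominating. Two vertices $u,v$ doubly resolve a pair $\{x,y\}$ if $d(u,x)-d(u,y)\ne d(v,x)-d(v,y)$; a set $S$ doubly resolves $\{x,y\}$ if some two vertices of $S$ doubly resolve it. *)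

theory Defs
  imports Main
begin

definition walk :: "('a \<Rightarrow> 'a \<Rightarrow> bool) \<Rightarrow> 'a set \<Rightarrow> 'a list \<Rightarrow> bool" where
  "walk E V p \<longleftrightarrow> p \<noteq> [] \<and> set p \<subseteq> V \<and> (\<forall>i. Suc i < length p \<longrightarrow> E (p ! i) (p ! Suc i))"

definition simple_graph :: "'a set \<Rightarrow> ('a \<Rightarrow> 'a \<Rightarrow> bool) \<Rightarrow> bool" where
  "simple_graph V E \<longleftrightarrow> finite V \<and> (\<forall>u v. E u v \<longrightarrow> u \<in> V \<and> v \<in> V)
     \<and> (\<forall>u v. E u v \<longrightarrow> E v u) \<and> (\<forall>u. \<not> E u u)"

definition connected_graph :: "'a set \<Rightarrow> ('a \<Rightarrow> 'a \<Rightarrow> bool) \<Rightarrow> bool" where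
  "connected_graph V E \<longleftrightarrow> V \<noteq> {} \<and>
     (\<forall>u\<in>V. \<forall>v\<in>V. \<exists>p. walk E V p \<and> hd p = u \<and> last p = v)"

definition dist :: "'a set \<Rightarrow> ('a \<Rightarrow> 'a \<Rightarrow> bool) \<Rightarrow> 'a \<Rightarrow> 'a \<Rightarrow> nat" where
  "dist V E u v = (LEAST n. \<exists>p. walk E V p \<and> hd p = u \<and> last p = v \<and> length p = Suc n)"

definition nbhd :: "'a set \<Rightarrow> ('a \<Rightarrow> 'a \<Rightarrow> bool) \<Rightarrow> 'a \<Rightarrow> 'a set" where
  "nbhd V E y = {z \<in> V. E y z}"

definition is_cycle :: "'a set \<Rightarrow> ('a \<Rightarrow> 'a \<Rightarrow> bool) \<Rightarrow> 'a list \<Rightarrow> bool" where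
  "is_cycle V E c \<longleftrightarrow> length c \<ge> 3 \<and> distinct c \<and> walk E V c \<and> E (last c) (hd c)"

definition girth_at_least :: "'a set \<Rightarrow> ('a \<Rightarrow> 'a \<Rightarrow> bool) \<Rightarrow> nat \<Rightarrow> bool" where
  "girth_at_least V E g \<longleftrightarrow> (\<forall>c. is_cycle V E c \<longrightarrow> length c \<ge> g)"

definition resolving :: "'a set \<Rightarrow> ('a \<Rightarrow> 'a \<Rightarrow> bool) \<Rightarrow> 'a set \<Rightarrow> bool" where
  "resolving V E S \<longleftrightarrow> S \<subseteq> V \<and>
     (\<forall>x\<in>V. \<forall>y\<in>V. x \<noteq> y \<longrightarrow> (\<exists>u\<in>S. dist V E u x \<noteq> dist V E u y))"

definition dominating :: "'a set \<Rightarrow> ('a \<Rightarrow> 'a \<Rightarrow> bool) \<Rightarrow> 'a set \<Rightarrow> bool" where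
  "dominating V E S \<longleftrightarrow> S \<subseteq> V \<and> (\<forall>v\<in>V - S. \<exists>u\<in>S. E v u)"

definition MLD_set :: "'a set \<Rightarrow> ('a \<Rightarrow> 'a \<Rightarrow> bool) \<Rightarrow> 'a set \<Rightarrow> bool" where
  "MLD_set V E S \<longleftrightarrow> resolving V E S \<and> dominating V E S"

definition doubly_resolves_pair :: "'a set \<Rightarrow> ('a \<Rightarrow> 'a \<Rightarrow> bool) \<Rightarrow> 'a \<Rightarrow> 'a \<Rightarrow> 'a \<Rightarrow> 'a \<Rightarrow> bool" where
  "doubly_resolves_pair V E u v x y \<longleftrightarrow>
     int (dist V E u x) - int (dist V E u y) \<noteq> int (dist V E v x) - int (dist V E v y)"

definition set_doubly_resolves :: "'a set \<Rightarrow> ('a \<Rightarrow> 'a \<Rightarrow> bool) \<Rightarrow> 'a set \<Rightarrow> 'a \<Rightarrow> 'a \<Rightarrow> bool" where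
  "set_doubly_resolves V E S x y \<longleftrightarrow> (\<exists>u\<in>S. \<exists>v\<in>S. doubly_resolves_pair V E u v x y)"

end

theory Submission
  imports Defs
begin

lemma walk_single: "walk E V [a] \<longleftrightarrow> a \<in> V"
  by (simp add: walk_def)

lemma walk_cons2: "walk E V (a#b#p) \<longleftrightarrow> a \<in> V \<and> E a b \<and> walk E V (b#p)"
proof
  assume w: "walk E V (a#b#p)"
  have all: "\<And>i. Suc i < length (a#b#p) \<Longrightarrow> E ((a#b#p) ! i) ((a#b#p) ! Suc i)"
    using w unfolding walk_def by blast
  have "E a b" using all[of 0] by simp
  moreover have "\<forall>i. Suc i < length (b#p) \<longrightarrow> E ((b#p) ! i) ((b#p) ! Suc i)"
  proof (intro allI impI)
    fix i assume "Suc i < length (b#p)"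
    then have "E ((a#b#p) ! Suc i) ((a#b#p) ! Suc (Suc i))" using all[of "Suc i"] by simp
    then show "E ((b#p) ! i) ((b#p) ! Suc i)" by simp
  qed
  moreover have "set (a#b#p) \<subseteq> V" using w unfolding walk_def by blast
  ultimately show "a \<in> V \<and> E a b \<and> walk E V (b#p)" unfolding walk_def by simp
next
  assume h: "a \<in> V \<and> E a b \<and> walk E V (b#p)"
  have all: "\<And>i. Suc i < length (b#p) \<Longrightarrow> E ((b#p) ! i) ((b#p) ! Suc i)"
    using h unfolding walk_def by blast
  have st: "set (b#p) \<subseteq> V" using h unfolding walk_def by blast
  have "\<forall>i. Suc i < length (a#b#p) \<longrightarrow> E ((a#b#p) ! i) ((a#b#p) ! Suc i)"
  proof (intro allI impI)
    fix i assume i: "Suc i < length (a#b#p)"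
    show "E ((a#b#p) ! i) ((a#b#p) ! Suc i)"
    proof (cases i)
      case 0 then show ?thesis using h by simp
    next
      case (Suc j)
      then have "Suc j < length (b#p)" using i by simp
      then have "E ((b#p) ! j) ((b#p) ! Suc j)" using all by blast
      then show ?thesis using Suc by simp
    qed
  qed
  then show "walk E V (a#b#p)" unfolding walk_def using h st by simp
qed

lemma dist_le:
  assumes "walk E V p" "hd p = u" "last p = v"
  shows "dist V E u v \<le> length p - 1"
proof -
  have "\<exists>q. walk E V q \<and> hd q = u \<and> last q = v \<and> length q = Suc (length p - 1)"
    using assms by (intro exI[of _ p]) (auto simp: walk_def)
  then show ?thesis unfolding dist_def by (rule Least_le)
qed

lemma dist_ex:
  assumes "connected_graph V E" "u \<in> V" "v \<in> V"
  shows "\<exists>p. walk E V p \<and> hd p = u \<and> last p = v \<and> length p = Suc (dist V E u v)"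
proof -
  obtain p where p: "walk E V p" "hd p = u" "last p = v"
    using assms unfolding connected_graph_def by blast
  then have "\<exists>n p. walk E V p \<and> hd p = u \<and> last p = v \<and> length p = Suc n"
    by (intro exI[of _ "length p - 1"] exI[of _ p]) (auto simp: walk_def)
  then show ?thesis unfolding dist_def by (rule LeastI_ex)
qed

lemma dist_self: "u \<in> V \<Longrightarrow> dist V E u u = 0"
  using dist_le[of E V "[u]" u u] by (simp add: walk_single)

lemma dist_edge: "E u v \<Longrightarrow> u \<in> V \<Longrightarrow> v \<in> V \<Longrightarrow> dist V E u v \<le> 1"
  using dist_le[of E V "[u,v]" u v] by (simp add: walk_cons2 walk_single)

lemma dist_0:
  assumes "connected_graph V E" "u \<in> V" "v \<in> V" "dist V E u v = 0"
  shows "u = v"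
proof -
  obtain p where "walk E V p \<and> hd p = u \<and> last p = v \<and> length p = Suc 0"
    using dist_ex[OF assms(1-3)] assms(4) by auto
  then show ?thesis by (cases p) auto
qed

lemma dist_1:
  assumes "connected_graph V E" "u \<in> V" "v \<in> V" "dist V E u v = 1"
  shows "E u v"
proof -
  obtain p where p: "walk E V p" "hd p = u" "last p = v" "length p = Suc (Suc 0)"
    using dist_ex[OF assms(1-3)] assms(4) by auto
  then obtain a b where "p = [a,b]"
    by (metis length_0_conv length_Suc_conv)
  then show ?thesis using p by (simp add: walk_cons2)
qed

theorem mainTheorem9:
  fixes V :: "'a set" and E :: "'a \<Rightarrow> 'a \<Rightarrow> bool" and S :: "'a set" and x y :: 'a
  assumes "simple_graph V E" and "connected_graph V E"
    and "girth_at_least V E 5"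
    and "MLD_set V E S"
    and "x \<in> S" and "y \<in> V - S"
    and "\<not> set_doubly_resolves V E S x y"
  shows "nbhd V E y = {x}"
proof -
  have Esym: "\<And>u v. E u v \<Longrightarrow> E v u" using assms(1) by (simp add: simple_graph_def)
  have Eirr: "\<And>u. \<not> E u u" using assms(1) by (simp add: simple_graph_def)
  have SV: "S \<subseteq> V" using assms(4) by (simp add: MLD_set_def dominating_def)
  have dom: "\<forall>v\<in>V - S. \<exists>u\<in>S. E v u" using assms(4) by (simp add: MLD_set_def dominating_def)
  have xV: "x \<in> V" using SV assms(5) by auto
  have yV: "y \<in> V" using assms(6) by auto
  have xy: "x \<noteq> y" using assms(5,6) by auto
  have key: "dist V E v y = dist V E v x + dist V E x y" if "v \<in> S" for v
  proof -
    have "\<not> doubly_resolves_pair V E x v x y" using assms(7) assms(5) that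
      unfolding set_doubly_resolves_def by blast
    then show ?thesis using dist_self[OF xV, of E] unfolding doubly_resolves_pair_def by simp
  qed
  have dxy: "dist V E x y \<noteq> 0" using dist_0[OF assms(2) xV yV] xy by auto
  have nbS: "s = x" if "s \<in> S" "E y s" for s
  proof -
    have "dist V E s y \<le> 1" using dist_edge[of E s y V] Esym[OF that(2)] that(1) SV yV by auto
    then have "dist V E s x = 0" using key[OF that(1)] dxy by simp
    then show ?thesis using dist_0[OF assms(2)] that SV xV by auto
  qed
  obtain s where s: "s \<in> S" "E y s" using dom assms(6) by auto
  have Eyx: "E y x" using nbS s by auto
  have dxy1: "dist V E x y = 1"
    using dist_edge[of E x y V] Esym[OF Eyx] xV yV dxy by linarith
  have "z = x" if z: "z \<in> nbhd V E y" for z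
  proof (rule ccontr)
    assume zx: "z \<noteq> x"
    have Eyz: "E y z" and zV: "z \<in> V" using z by (auto simp: nbhd_def)
    have zS: "z \<notin> S" using nbS Eyz zx by auto
    obtain w where w: "w \<in> S" "E z w" using dom zS zV by auto
    have wV: "w \<in> V" using w SV by auto
    have "dist V E w y \<le> 2"
      using dist_le[of E V "[w,z,y]" w y] Esym[OF w(2)] Esym[OF Eyz] zV yV wV by (simp add: walk_cons2 walk_single)
    then have dwx: "dist V E w x \<le> 1" using key[OF w(1)] dxy1 by simp
    have yz: "y \<noteq> z" using Eirr Eyz by metis
    have wz: "w \<noteq> z" using w zS by auto
    have wy: "w \<noteq> y" using w assms(6) by auto
    show False
    proof (cases "dist V E w x = 0")
      case True
      then have "w = x" using dist_0[OF assms(2) wV xV] by simp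
      then have "is_cycle V E [x,y,z]"
        unfolding is_cycle_def using xy yz zx Esym[OF Eyx] Eyz w xV yV zV
        by (simp add: walk_cons2 walk_single)
      then show False using assms(3) unfolding girth_at_least_def by fastforce
    next
      case False
      then have "E w x" using dist_1[OF assms(2) wV xV] dwx by simp
      have "w \<noteq> x" using False dist_self[OF xV, of E] by (metis dist_self)
      then have "is_cycle V E [w,z,y,x]"
        unfolding is_cycle_def using xy yz zx wz wy Esym[OF Eyz] Esym[OF w(2)] Eyx Esym[OF \<open>E w x\<close>] \<open>w \<noteq> x\<close> xV yV zV wV
        by (simp add: walk_cons2 walk_single)
      then show False using assms(3) unfolding girth_at_least_def by fastforce
    qed
  qed
  moreover have "x \<in> nbhd V E y" using Eyx xV by (simp add: nbhd_def)
  ultimately show ?thesis by blast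
qed

end
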